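(* Let $S$ be a numerical semigroup of multiplicity $m$. Then the set of binomials $$\{\,x_ix_j-y^{c_{i,j}}x_{i+j} : 1\le i\le j\le m-1\,\}$$ generates the Apéry toric ideal $J_S$ and is a Gröbner basis of $J_S$ with respect to any term order $\preceq$ on $R$ such that $\mathbf x^{\mathbf a}y^r\succ \mathbf x^{\mathbf b}y^s$ whenever $a_1+\cdots+a_{m-1}>b_1+\cdots+b_{m-1}$ (where $\mathbf x^{\mathbf a},\mathbf x^{\mathbf b}$ are monomials in $x_1,\dots,x_{m-1}$). Moreover, the initial ideal of $J_S$ under such an order is $\langle x_ix_j: 1\le i,j\le m-1\rangle$.
   Context: A numerical semigroup is a submonoid $S\subseteq(\mathbb Z_{\ge0},+)$ containing $0$ with finite complement; its multiplicity is $m=\min(S\setminus\{0\})\ge2$. The Apéry set is $\{n\in S: n-m\notin S\}=\{0,a_1,\dots,a_{m-1}\}$ with $a_i\equiv i\pmod m$; set $a_0=m$. Subscripts are read modulo $m$ with representatives in $\{0,\dots,m-1\}$. Let $R=\Bbbk[x_0,x_1,\dots,x_{m-1}]$ over a field $\Bbbk$, graded by $\deg x_i=a_i$, and write $y=x_0$ (so $x_{i+j}=y$ when $i+j\equiv0$). The Apéry toric ideal is $J_S=\ker(\varphi)$ where $\varphi:R\to\Bbbk[t]$, $x_i\mapsto t^{a_i}$. For $1\le i,j\le m-1$, $c_{i,j}=\frac1m(a_i+a_j-a_{i+j})\ge0$. *)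

theory Defs
  imports "HOL-Library.Poly_Mapping" "HOL-Computational_Algebra.Polynomial"
begin

definition numerical_semigroup :: "nat set \<Rightarrow> bool" where
  "numerical_semigroup S \<longleftrightarrow> 0 \<in> S \<and> (\<forall>a\<in>S. \<forall>b\<in>S. a + b \<in> S) \<and> finite (UNIV - S)"

definition multiplicity :: "nat set \<Rightarrow> nat" where
  "multiplicity S = (LEAST n. n \<in> S \<and> n \<noteq> 0)"

text \<open>Apery set of S with respect to m: elements n of S with n - m not in S
  (n - m taken in the integers, so elements n < m always qualify).\<close>
definition apery_set :: "nat set \<Rightarrow> nat \<Rightarrow> nat set" where
  "apery_set S m = {n \<in> S. \<not> (m \<le> n \<and> n - m \<in> S)}"

definition apery_elt :: "nat set \<Rightarrow> nat \<Rightarrow> nat" where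
  "apery_elt S i = (let m = multiplicity S in
      if i mod m = 0 then m else (THE n. n \<in> apery_set S m \<and> n mod m = i mod m))"

definition cij :: "nat set \<Rightarrow> nat \<Rightarrow> nat \<Rightarrow> nat" where
  "cij S i j = (let m = multiplicity S in
      (apery_elt S i + apery_elt S j - apery_elt S ((i + j) mod m)) div m)"

text \<open>Monomials are exponent vectors nat \<Rightarrow>0 nat (variable x_i has index i),
  polynomials are maps from monomials to coefficients.  The ring
  R = k[x_0,...,x_{m-1}] is the set of polynomials whose monomials only
  involve the variables 0..m-1; y = x_0.\<close>

type_synonym monom = "nat \<Rightarrow>\<^sub>0 nat"
type_synonym 'k mpoly = "monom \<Rightarrow>\<^sub>0 'k"

definition monoms_in :: "nat \<Rightarrow> monom set" where
  "monoms_in m = {\<alpha>. Poly_Mapping.keys \<alpha> \<subseteq> {..<m}}"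

definition poly_ring :: "nat \<Rightarrow> ('k::comm_ring_1) mpoly set" where
  "poly_ring m = {p. Poly_Mapping.keys p \<subseteq> monoms_in m}"

definition var :: "nat \<Rightarrow> ('k::comm_ring_1) mpoly" where
  "var i = Poly_Mapping.single (Poly_Mapping.single i 1) 1"

definition monom_poly :: "monom \<Rightarrow> ('k::comm_ring_1) mpoly" where
  "monom_poly \<alpha> = Poly_Mapping.single \<alpha> 1"

definition ideal_gen :: "nat \<Rightarrow> ('k::comm_ring_1) mpoly set \<Rightarrow> 'k mpoly set" where
  "ideal_gen m G = {p. \<exists>F q. finite F \<and> F \<subseteq> G \<and> (\<forall>g\<in>F. q g \<in> poly_ring m)
                        \<and> p = (\<Sum>g\<in>F. q g * g)}"

text \<open>phi: x_i \<mapsto> t^{a_i}, extended to a k-algebra homomorphism R \<rightarrow> k[t].\<close>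
definition apery_phi :: "nat set \<Rightarrow> ('k::comm_ring_1) mpoly \<Rightarrow> 'k poly" where
  "apery_phi S p = (\<Sum>\<alpha>\<in>Poly_Mapping.keys p. Polynomial.monom (Poly_Mapping.lookup p \<alpha>)
                       (\<Sum>i\<in>Poly_Mapping.keys \<alpha>. Poly_Mapping.lookup \<alpha> i * apery_elt S i))"

definition apery_toric_ideal :: "nat set \<Rightarrow> ('k::comm_ring_1) mpoly set" where
  "apery_toric_ideal S = {p \<in> poly_ring (multiplicity S). apery_phi S p = 0}"

definition apery_binomials :: "nat set \<Rightarrow> ('k::comm_ring_1) mpoly set" where
  "apery_binomials S = (let m = multiplicity S in
     {var i * var j - var 0 ^ cij S i j * var ((i + j) mod m) | i j.
        1 \<le> i \<and> i \<le> j \<and> j \<le> m - 1})"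

definition term_order :: "nat \<Rightarrow> (monom \<Rightarrow> monom \<Rightarrow> bool) \<Rightarrow> bool" where
  "term_order m le \<longleftrightarrow>
     (\<forall>\<alpha>\<in>monoms_in m. le \<alpha> \<alpha>) \<and>
     (\<forall>\<alpha>\<in>monoms_in m. \<forall>\<beta>\<in>monoms_in m. le \<alpha> \<beta> \<and> le \<beta> \<alpha> \<longrightarrow> \<alpha> = \<beta>) \<and>
     (\<forall>\<alpha>\<in>monoms_in m. \<forall>\<beta>\<in>monoms_in m. \<forall>\<gamma>\<in>monoms_in m. le \<alpha> \<beta> \<and> le \<beta> \<gamma> \<longrightarrow> le \<alpha> \<gamma>) \<and>
     (\<forall>\<alpha>\<in>monoms_in m. \<forall>\<beta>\<in>monoms_in m. le \<alpha> \<beta> \<or> le \<beta> \<alpha>) \<and>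
     (\<forall>\<alpha>\<in>monoms_in m. le 0 \<alpha>) \<and>
     (\<forall>\<alpha>\<in>monoms_in m. \<forall>\<beta>\<in>monoms_in m. \<forall>\<gamma>\<in>monoms_in m. le \<alpha> \<beta> \<longrightarrow> le (\<alpha> + \<gamma>) (\<beta> + \<gamma>))"

definition lead_monom :: "(monom \<Rightarrow> monom \<Rightarrow> bool) \<Rightarrow> ('k::comm_ring_1) mpoly \<Rightarrow> monom" where
  "lead_monom le p = (THE \<alpha>. \<alpha> \<in> Poly_Mapping.keys p \<and> (\<forall>\<beta>\<in>Poly_Mapping.keys p. le \<beta> \<alpha>))"

definition initial_ideal :: "nat \<Rightarrow> (monom \<Rightarrow> monom \<Rightarrow> bool) \<Rightarrow> ('k::comm_ring_1) mpoly set \<Rightarrow> 'k mpoly set" where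
  "initial_ideal m le I = ideal_gen m {monom_poly (lead_monom le p) | p. p \<in> I \<and> p \<noteq> 0}"

definition groebner_basis :: "nat \<Rightarrow> (monom \<Rightarrow> monom \<Rightarrow> bool) \<Rightarrow> ('k::comm_ring_1) mpoly set \<Rightarrow> 'k mpoly set \<Rightarrow> bool" where
  "groebner_basis m le G I \<longleftrightarrow> G \<subseteq> I \<and>
     initial_ideal m le I = ideal_gen m {monom_poly (lead_monom le g) | g. g \<in> G \<and> g \<noteq> 0}"

end

theory Submission
  imports Defs
begin


locale nsg =
  fixes S :: "nat set"
  assumes ns: "numerical_semigroup S" and m2: "multiplicity S \<ge> 2"
begin

abbreviation "m \<equiv> multiplicity S"
abbreviation "a \<equiv> apery_elt S"

lemma S0: "0 \<in> S" and Sadd: "x \<in> S \<Longrightarrow> y \<in> S \<Longrightarrow> x + y \<in> S" and Sfin: "finite (UNIV - S)"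
  using ns unfolding numerical_semigroup_def by auto

lemma big_in_S: "\<exists>N. \<forall>n\<ge>N. n \<in> S"
proof -
  obtain N where "\<forall>x\<in>UNIV - S. x < N"
    using Sfin by (auto simp: finite_nat_set_iff_bounded)
  then have "\<forall>n\<ge>N. n \<in> S" by (auto simp: not_less[symmetric])
  then show ?thesis by blast
qed

lemma ex_nz: "\<exists>n. n \<in> S \<and> n \<noteq> 0"
proof -
  obtain N where "\<forall>n\<ge>N. n \<in> S" using big_in_S by blast
  then show ?thesis by (intro exI[of _ "N+1"]) auto
qed

lemma m_in: "m \<in> S" and m_nz: "m \<noteq> 0"
  using LeastI_ex[OF ex_nz] unfolding multiplicity_def by auto

lemma m_le: "n \<in> S \<Longrightarrow> n \<noteq> 0 \<Longrightarrow> m \<le> n"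
  unfolding multiplicity_def by (rule Least_le) simp

lemma S_mult: "n \<in> S \<Longrightarrow> n + k * m \<in> S"
proof (induction k)
  case (Suc k)
  have "n + Suc k * m = (n + k * m) + m" by simp
  then show ?case using Sadd[OF Suc.IH m_in] Suc.prems by (simp add: ac_simps)
qed simp

lemma ex_res: "\<exists>n. n \<in> S \<and> n mod m = i mod m"
proof -
  obtain N where N: "\<forall>n\<ge>N. n \<in> S" using big_in_S by blast
  have "N * m + i mod m \<ge> N" using m_nz by (simp add: trans_le_add1)
  then show ?thesis using N by (intro exI[of _ "N * m + i mod m"]) simp
qed

lemma apery_char:
  assumes "i mod m \<noteq> 0"
  shows "a i \<in> S \<and> a i mod m = i mod m \<and> (\<forall>n\<in>S. n mod m = i mod m \<longrightarrow> a i \<le> n)"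
proof -
  define n0 where "n0 = (LEAST n. n \<in> S \<and> n mod m = i mod m)"
  have n0: "n0 \<in> S \<and> n0 mod m = i mod m" using LeastI_ex[OF ex_res] n0_def by auto
  have n0min: "\<And>n. n \<in> S \<Longrightarrow> n mod m = i mod m \<Longrightarrow> n0 \<le> n"
    unfolding n0_def by (rule Least_le) simp
  have n0ap: "n0 \<in> apery_set S m \<and> n0 mod m = i mod m"
  proof -
    have "\<not> (m \<le> n0 \<and> n0 - m \<in> S)"
    proof
      assume h: "m \<le> n0 \<and> n0 - m \<in> S"
      then have "(n0 - m) mod m = i mod m" using n0 le_mod_geq[of m n0] by simp
      then have "n0 \<le> n0 - m" using n0min h by blast
      then show False using m_nz h by linarith
    qed
    then show ?thesis using n0 unfolding apery_set_def by auto
  qed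
  have uniq: "x = n0" if x: "x \<in> apery_set S m \<and> x mod m = i mod m" for x
  proof (rule ccontr)
    assume ne: "x \<noteq> n0"
    have xS: "x \<in> S" using x unfolding apery_set_def by auto
    have "n0 \<le> x" using n0min xS x by auto
    then have lt: "n0 < x" using ne by auto
    have "m dvd x - n0" using x n0 lt mod_eq_dvd_iff_nat[of n0 x m] by simp
    then obtain k where k: "x - n0 = m * k" by (auto elim: dvdE)
    then obtain k' where k': "k = Suc k'" using lt by (cases k) auto
    have xe: "x = n0 + m + k' * m" using k k' lt by (simp add: algebra_simps)
    then have "x - m = n0 + k' * m" "m \<le> x" by simp_all
    then have "x - m \<in> S" using S_mult n0 by simp
    then show False using x \<open>m \<le> x\<close> unfolding apery_set_def by auto
  qed
  have "a i = (THE n. n \<in> apery_set S m \<and> n mod m = i mod m)"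
    using assms unfolding apery_elt_def Let_def by simp
  also have "\<dots> = n0" by (rule the_equality) (use n0ap uniq in blast)+
  finally have "a i = n0" .
  then show ?thesis using n0 n0min by auto
qed

lemma a0: "i mod m = 0 \<Longrightarrow> a i = m"
  unfolding apery_elt_def by simp

lemma a_in: "a i \<in> S"
  using apery_char a0 m_in by (cases "i mod m = 0") auto

lemma a_mod: "a i mod m = i mod m"
  using apery_char a0 by (cases "i mod m = 0") auto

lemma a_pos: "a i \<noteq> 0"
proof (cases "i mod m = 0")
  case True then show ?thesis using a0 m_nz by simp
next
  case False then show ?thesis using a_mod[of i] by (cases "a i = 0") auto
qed

lemma cij_eq:
  assumes "1 \<le> i" "i \<le> m - 1" "1 \<le> j" "j \<le> m - 1"
  shows "cij S i j * m + a ((i + j) mod m) = a i + a j"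
proof -
  define k where "k = (i + j) mod m"
  have res: "(a i + a j) mod m = a k mod m"
  proof -
    have "(a i + a j) mod m = (a i mod m + a j mod m) mod m" by (simp add: mod_add_eq)
    also have "\<dots> = (i mod m + j mod m) mod m" by (simp add: a_mod)
    also have "\<dots> = (i + j) mod m" by (simp add: mod_add_eq)
    also have "\<dots> = a k mod m" using a_mod[of k] unfolding k_def by simp
    finally show ?thesis .
  qed
  have le: "a k \<le> a i + a j"
  proof (cases "k mod m = 0")
    case True
    then show ?thesis using a0 m_le[of "a i + a j"] Sadd[OF a_in a_in] a_pos[of i] by auto
  next
    case False
    then show ?thesis using apery_char[OF False] Sadd[OF a_in a_in] res by auto
  qed
  have "m dvd a i + a j - a k" using res mod_eq_dvd_iff_nat[OF le] by simp
  then have "(a i + a j - a k) div m * m = a i + a j - a k" by (rule dvd_div_mult_self)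
  then show ?thesis unfolding cij_def Let_def k_def[symmetric] using le by simp
qed

end


definition wdeg :: "nat set \<Rightarrow> monom \<Rightarrow> nat" where
  "wdeg S \<alpha> = (\<Sum>i\<in>Poly_Mapping.keys \<alpha>. Poly_Mapping.lookup \<alpha> i * apery_elt S i)"

definition xdeg :: "nat \<Rightarrow> monom \<Rightarrow> nat" where
  "xdeg m \<alpha> = (\<Sum>i\<in>{1..m-1}. Poly_Mapping.lookup \<alpha> i)"

lemma wdeg_alt:
  assumes "finite A" "Poly_Mapping.keys \<alpha> \<subseteq> A"
  shows "wdeg S \<alpha> = (\<Sum>i\<in>A. Poly_Mapping.lookup \<alpha> i * apery_elt S i)"
  unfolding wdeg_def using assms
  by (intro sum.mono_neutral_left) (auto simp: in_keys_iff)

lemma wdeg_add: "wdeg S (\<alpha> + \<beta>) = wdeg S \<alpha> + wdeg S \<beta>"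
proof -
  let ?A = "Poly_Mapping.keys \<alpha> \<union> Poly_Mapping.keys \<beta>"
  have "wdeg S (\<alpha> + \<beta>) = (\<Sum>i\<in>?A. Poly_Mapping.lookup (\<alpha> + \<beta>) i * apery_elt S i)"
    using keys_add[of \<alpha> \<beta>] by (intro wdeg_alt) auto
  also have "\<dots> = (\<Sum>i\<in>?A. Poly_Mapping.lookup \<alpha> i * apery_elt S i) + (\<Sum>i\<in>?A. Poly_Mapping.lookup \<beta> i * apery_elt S i)"
    by (simp add: lookup_add algebra_simps sum.distrib)
  also have "\<dots> = wdeg S \<alpha> + wdeg S \<beta>"
    by (subst (1 2) wdeg_alt[of ?A]) auto
  finally show ?thesis .
qed

lemma wdeg_single: "wdeg S (Poly_Mapping.single k v) = v * apery_elt S k"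
  unfolding wdeg_def by simp

lemma wdeg_zero: "wdeg S 0 = 0"
  unfolding wdeg_def by simp

lemma xdeg_add: "xdeg m (\<alpha> + \<beta>) = xdeg m \<alpha> + xdeg m \<beta>"
  unfolding xdeg_def by (simp add: lookup_add sum.distrib)

lemma xdeg_single: "xdeg m (Poly_Mapping.single k v) = (if k \<in> {1..m-1} then v else 0)"
  unfolding xdeg_def by (simp add: lookup_single when_def)

lemma phi_alt:
  assumes "finite A" "Poly_Mapping.keys p \<subseteq> A"
  shows "apery_phi S p = (\<Sum>\<alpha>\<in>A. Polynomial.monom (Poly_Mapping.lookup p \<alpha>) (wdeg S \<alpha>))"
  unfolding apery_phi_def wdeg_def[symmetric] using assms
  by (intro sum.mono_neutral_left) (auto simp: in_keys_iff)

lemma phi_add: "apery_phi S (p + q) = apery_phi S p + apery_phi S q"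
proof -
  let ?A = "Poly_Mapping.keys p \<union> Poly_Mapping.keys q"
  have "apery_phi S (p + q) = (\<Sum>\<alpha>\<in>?A. Polynomial.monom (Poly_Mapping.lookup (p + q) \<alpha>) (wdeg S \<alpha>))"
    using keys_add[of p q] by (intro phi_alt) auto
  also have "\<dots> = (\<Sum>\<alpha>\<in>?A. Polynomial.monom (Poly_Mapping.lookup p \<alpha>) (wdeg S \<alpha>))
     + (\<Sum>\<alpha>\<in>?A. Polynomial.monom (Poly_Mapping.lookup q \<alpha>) (wdeg S \<alpha>))"
    by (simp add: lookup_add add_monom[symmetric] sum.distrib)
  also have "\<dots> = apery_phi S p + apery_phi S q"
    by (subst (1 2) phi_alt[of ?A]) auto
  finally show ?thesis .
qed

lemma phi_zero: "apery_phi S 0 = 0"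
  unfolding apery_phi_def by simp

lemma phi_single: "apery_phi S (Poly_Mapping.single \<alpha> c) = Polynomial.monom c (wdeg S \<alpha>)"
  unfolding apery_phi_def wdeg_def[symmetric] by simp

lemma phi_sum: "apery_phi S (\<Sum>x\<in>X. f x) = (\<Sum>x\<in>X. apery_phi S (f x))"
  by (induction X rule: infinite_finite_induct) (auto simp: phi_zero phi_add)

lemma phi_uminus: "apery_phi S (- p) = - apery_phi S (p :: 'k::comm_ring_1 mpoly)"
proof -
  have "apery_phi S (- p) + apery_phi S p = 0"
    using phi_add[of S "-p" p] phi_zero[of S] by (metis add.left_inverse)
  then show ?thesis by (simp add: eq_neg_iff_add_eq_0)
qed

lemma phi_diff: "apery_phi S (p - q) = apery_phi S p - apery_phi S (q :: 'k::comm_ring_1 mpoly)"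
  using phi_add[of S p "-q"] phi_uminus[of S q] by simp

lemma expansion: "p = (\<Sum>\<alpha>\<in>Poly_Mapping.keys p. Poly_Mapping.single \<alpha> (Poly_Mapping.lookup p \<alpha>))"
proof (rule poly_mapping_eqI)
  fix k
  show "Poly_Mapping.lookup p k = Poly_Mapping.lookup (\<Sum>\<alpha>\<in>Poly_Mapping.keys p. Poly_Mapping.single \<alpha> (Poly_Mapping.lookup p \<alpha>)) k"
    by (simp add: lookup_sum lookup_single when_def in_keys_iff)
qed

lemma phi_mult: "apery_phi S (p * q) = apery_phi S p * apery_phi S (q :: 'k::comm_ring_1 mpoly)"
proof -
  let ?c = "Poly_Mapping.lookup p" and ?d = "Poly_Mapping.lookup q"
  have "p * q = (\<Sum>\<alpha>\<in>Poly_Mapping.keys p. Poly_Mapping.single \<alpha> (?c \<alpha>)) * (\<Sum>\<beta>\<in>Poly_Mapping.keys q. Poly_Mapping.single \<beta> (?d \<beta>))"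
    by (subst (1) expansion[of p], subst (1) expansion[of q]) (rule refl)
  also have "\<dots> = (\<Sum>\<alpha>\<in>Poly_Mapping.keys p. \<Sum>\<beta>\<in>Poly_Mapping.keys q. Poly_Mapping.single (\<alpha> + \<beta>) (?c \<alpha> * ?d \<beta>))"
    by (simp add: sum_product mult_single)
  finally have "apery_phi S (p * q) = (\<Sum>\<alpha>\<in>Poly_Mapping.keys p. \<Sum>\<beta>\<in>Poly_Mapping.keys q.
        Polynomial.monom (?c \<alpha>) (wdeg S \<alpha>) * Polynomial.monom (?d \<beta>) (wdeg S \<beta>))"
    by (simp add: phi_sum phi_single wdeg_add mult_monom)
  also have "\<dots> = apery_phi S p * apery_phi S q"
    unfolding apery_phi_def wdeg_def[symmetric] by (simp add: sum_product)
  finally show ?thesis .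
qed

lemma monoms_in_add: "\<alpha> \<in> monoms_in m \<Longrightarrow> \<beta> \<in> monoms_in m \<Longrightarrow> \<alpha> + \<beta> \<in> monoms_in m"
  unfolding monoms_in_def using keys_add[of \<alpha> \<beta>] by blast

lemma monoms_in_single: "k < m \<Longrightarrow> Poly_Mapping.single k v \<in> monoms_in m"
  unfolding monoms_in_def by auto

lemma monoms_in_zero: "0 \<in> monoms_in m"
  unfolding monoms_in_def by auto

lemma pr_add: "p \<in> poly_ring m \<Longrightarrow> q \<in> poly_ring m \<Longrightarrow> p + q \<in> poly_ring m"
  unfolding poly_ring_def using keys_add[of p q] by blast

lemma pr_mult: "p \<in> poly_ring m \<Longrightarrow> q \<in> poly_ring m \<Longrightarrow> p * q \<in> poly_ring m"
  unfolding poly_ring_def using keys_mult[of p q] monoms_in_add[of _ m] by blast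

lemma pr_uminus: "p \<in> poly_ring m \<Longrightarrow> - (p::'k::comm_ring_1 mpoly) \<in> poly_ring m"
  unfolding poly_ring_def by (auto simp: in_keys_iff)

lemma pr_diff: "p \<in> poly_ring m \<Longrightarrow> q \<in> poly_ring m \<Longrightarrow> p - (q::'k::comm_ring_1 mpoly) \<in> poly_ring m"
  using pr_add[OF _ pr_uminus] by (metis diff_conv_add_uminus)

lemma pr_zero: "0 \<in> poly_ring m"
  unfolding poly_ring_def by auto

lemma pr_one: "1 \<in> poly_ring m"
  unfolding poly_ring_def using monoms_in_zero by auto

lemma pr_single: "\<alpha> \<in> monoms_in m \<Longrightarrow> Poly_Mapping.single \<alpha> c \<in> poly_ring m"
  unfolding poly_ring_def by auto

lemma pr_sum: "(\<And>x. x \<in> X \<Longrightarrow> f x \<in> poly_ring m) \<Longrightarrow> (\<Sum>x\<in>X. f x) \<in> poly_ring m"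
  by (induction X rule: infinite_finite_induct) (auto intro: pr_add pr_zero)

lemma ig_zero: "0 \<in> ideal_gen m G"
  unfolding ideal_gen_def by (intro CollectI exI[of _ "{}"]) auto

lemma ig_gen: "g \<in> G \<Longrightarrow> (g::'k::comm_ring_1 mpoly) \<in> ideal_gen m G"
  unfolding ideal_gen_def
  by (intro CollectI exI[of _ "{g}"] exI[of _ "\<lambda>_. 1"]) (auto simp: pr_one)

lemma ig_add:
  assumes "p \<in> ideal_gen m G" "q \<in> ideal_gen m G"
  shows "p + q \<in> ideal_gen m (G :: 'k::comm_ring_1 mpoly set)"
proof -
  obtain F1 q1 where 1: "finite F1" "F1 \<subseteq> G" "\<forall>g\<in>F1. q1 g \<in> poly_ring m" "p = (\<Sum>g\<in>F1. q1 g * g)"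
    using assms(1) unfolding ideal_gen_def by auto
  obtain F2 q2 where 2: "finite F2" "F2 \<subseteq> G" "\<forall>g\<in>F2. q2 g \<in> poly_ring m" "q = (\<Sum>g\<in>F2. q2 g * g)"
    using assms(2) unfolding ideal_gen_def by auto
  define r where "r g = (if g \<in> F1 then q1 g else 0) + (if g \<in> F2 then q2 g else 0)" for g
  have "(\<Sum>g\<in>F1 \<union> F2. r g * g) = (\<Sum>g\<in>F1 \<union> F2. (if g \<in> F1 then q1 g else 0) * g)
      + (\<Sum>g\<in>F1 \<union> F2. (if g \<in> F2 then q2 g else 0) * g)"
    unfolding r_def by (simp add: distrib_right sum.distrib)
  also have "(\<Sum>g\<in>F1 \<union> F2. (if g \<in> F1 then q1 g else 0) * g) = (\<Sum>g\<in>F1. q1 g * g)"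
    using 1 2 by (intro sum.mono_neutral_cong_right) auto
  also have "(\<Sum>g\<in>F1 \<union> F2. (if g \<in> F2 then q2 g else 0) * g) = (\<Sum>g\<in>F2. q2 g * g)"
    using 1 2 by (intro sum.mono_neutral_cong_right) auto
  finally have sm: "p + q = (\<Sum>g\<in>F1 \<union> F2. r g * g)" using 1 2 by simp
  have rp: "\<forall>g\<in>F1 \<union> F2. r g \<in> poly_ring m"
  proof
    fix g assume "g \<in> F1 \<union> F2"
    have a1: "(if g \<in> F1 then q1 g else 0) \<in> poly_ring m" using 1 by (simp add: pr_zero)
    have a2: "(if g \<in> F2 then q2 g else 0) \<in> poly_ring m" using 2 by (simp add: pr_zero)
    show "r g \<in> poly_ring m" unfolding r_def by (rule pr_add[OF a1 a2])
  qed
  show ?thesis unfolding ideal_gen_def mem_Collect_eq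
    by (intro exI[of _ "F1 \<union> F2"] exI[of _ r] conjI sm rp) (use 1 2 in auto)
qed

lemma ig_mult:
  assumes "r \<in> poly_ring m" "p \<in> ideal_gen m G"
  shows "r * p \<in> ideal_gen m (G :: 'k::comm_ring_1 mpoly set)"
proof -
  obtain F q where 1: "finite F" "F \<subseteq> G" "\<forall>g\<in>F. q g \<in> poly_ring m" "p = (\<Sum>g\<in>F. q g * g)"
    using assms(2) unfolding ideal_gen_def by auto
  have sm: "r * p = (\<Sum>g\<in>F. (r * q g) * g)" using 1 by (simp add: sum_distrib_left mult.assoc)
  have rp: "\<forall>g\<in>F. r * q g \<in> poly_ring m" using 1 assms(1) by (auto intro: pr_mult)
  show ?thesis unfolding ideal_gen_def mem_Collect_eq
    by (intro exI[of _ F] exI[of _ "\<lambda>g. r * q g"] conjI sm rp) (use 1 in auto)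
qed

lemma ig_sum: "(\<And>x. x \<in> X \<Longrightarrow> f x \<in> ideal_gen m G) \<Longrightarrow> (\<Sum>x\<in>X. f x) \<in> ideal_gen m (G :: 'k::comm_ring_1 mpoly set)"
  by (induction X rule: infinite_finite_induct) (auto intro: ig_add ig_zero)

lemma ig_diff:
  assumes "p \<in> ideal_gen m G" "q \<in> ideal_gen m G"
  shows "p - q \<in> ideal_gen m (G :: 'k::comm_ring_1 mpoly set)"
proof -
  have "(- 1) * q \<in> ideal_gen m G" using assms(2) pr_uminus[OF pr_one] by (intro ig_mult)
  then show ?thesis using ig_add[OF assms(1)] by (metis diff_conv_add_uminus mult_minus1)
qed

lemma ig_mono:
  assumes "G \<subseteq> ideal_gen m H"
  shows "ideal_gen m G \<subseteq> ideal_gen m (H :: 'k::comm_ring_1 mpoly set)"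
proof
  fix p assume "p \<in> ideal_gen m G"
  then obtain F q where 1: "finite F" "F \<subseteq> G" "\<forall>g\<in>F. q g \<in> poly_ring m" "p = (\<Sum>g\<in>F. q g * g)"
    unfolding ideal_gen_def by auto
  show "p \<in> ideal_gen m H" unfolding 1(4)
    using 1 assms by (intro ig_sum ig_mult) auto
qed

lemma ig_subset: "G \<subseteq> H \<Longrightarrow> ideal_gen m G \<subseteq> ideal_gen m (H :: 'k::comm_ring_1 mpoly set)"
  using ig_mono ig_gen by (metis subsetI subset_iff)

lemma ig_pr: "G \<subseteq> poly_ring m \<Longrightarrow> ideal_gen m G \<subseteq> poly_ring m"
  unfolding ideal_gen_def by (auto intro!: pr_sum pr_mult)

lemma monom_poly_mult: "monom_poly \<alpha> * monom_poly \<beta> = (monom_poly (\<alpha> + \<beta>) :: 'k::comm_ring_1 mpoly)"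
  unfolding monom_poly_def by (simp add: mult_single)

lemma var_mult: "var i * var j = (monom_poly (Poly_Mapping.single i 1 + Poly_Mapping.single j 1) :: 'k::comm_ring_1 mpoly)"
  unfolding var_def monom_poly_def by (simp add: mult_single)

lemma var_pow: "var i ^ c = (monom_poly (Poly_Mapping.single i c) :: 'k::comm_ring_1 mpoly)"
proof (induction c)
  case 0 then show ?case unfolding monom_poly_def by simp
next
  case (Suc c)
  have "Poly_Mapping.single i (Suc c) = Poly_Mapping.single i 1 + Poly_Mapping.single i c"
    by (simp add: single_add[symmetric])
  then show ?case using Suc unfolding var_def monom_poly_def by (simp add: mult_single)
qed



context nsg
begin

lemma xdeg0_shape:
  assumes "\<alpha> \<in> monoms_in m" "xdeg m \<alpha> = 0"
  shows "\<alpha> = Poly_Mapping.single 0 (Poly_Mapping.lookup \<alpha> 0)"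
proof (rule poly_mapping_eqI)
  fix k
  have z: "\<forall>i\<in>{1..m-1}. Poly_Mapping.lookup \<alpha> i = 0" using assms(2) unfolding xdeg_def by simp
  show "Poly_Mapping.lookup \<alpha> k = Poly_Mapping.lookup (Poly_Mapping.single 0 (Poly_Mapping.lookup \<alpha> 0)) k"
  proof (cases "k = 0")
    case True then show ?thesis by (simp add: lookup_single)
  next
    case False
    show ?thesis
    proof (cases "k < m")
      case True then show ?thesis using z False by (simp add: lookup_single when_def)
    next
      case nk: False
      then have "k \<notin> Poly_Mapping.keys \<alpha>" using assms(1) unfolding monoms_in_def by auto
      then show ?thesis using False by (simp add: lookup_single when_def in_keys_iff)
    qed
  qed
qed

lemma xdeg1_shape:
  assumes "\<alpha> \<in> monoms_in m" "xdeg m \<alpha> = 1"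
  shows "\<exists>i\<in>{1..m-1}. \<alpha> = Poly_Mapping.single 0 (Poly_Mapping.lookup \<alpha> 0) + Poly_Mapping.single i 1"
proof -
  obtain i where i: "i \<in> {1..m-1}" "Poly_Mapping.lookup \<alpha> i \<noteq> 0"
    using assms(2) unfolding xdeg_def by (metis (no_types, lifting) sum.neutral zero_neq_one)
  have le: "(\<Sum>k\<in>A. Poly_Mapping.lookup \<alpha> k) \<le> 1" if "A \<subseteq> {1..m-1}" for A
    using assms(2) unfolding xdeg_def by (metis finite_atLeastAtMost sum_mono2 that zero_le)
  have li: "Poly_Mapping.lookup \<alpha> i = 1" using le[of "{i}"] i by simp
  have lj: "Poly_Mapping.lookup \<alpha> j = 0" if "j \<in> {1..m-1}" "j \<noteq> i" for j
    using le[of "{i, j}"] i that li by simp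
  have "\<alpha> = Poly_Mapping.single 0 (Poly_Mapping.lookup \<alpha> 0) + Poly_Mapping.single i 1"
  proof (rule poly_mapping_eqI)
    fix k
    show "Poly_Mapping.lookup \<alpha> k = Poly_Mapping.lookup (Poly_Mapping.single 0 (Poly_Mapping.lookup \<alpha> 0) + Poly_Mapping.single i 1) k"
    proof (cases "k = 0")
      case True then show ?thesis using i by (simp add: lookup_single lookup_add when_def)
    next
      case False
      show ?thesis
      proof (cases "k < m")
        case True then show ?thesis using lj[of k] li False by (auto simp: lookup_single lookup_add when_def)
      next
        case nk: False
        then have "k \<notin> Poly_Mapping.keys \<alpha>" using assms(1) unfolding monoms_in_def by auto
        then show ?thesis using False nk i by (auto simp: lookup_single lookup_add when_def in_keys_iff)
      qed
    qed
  qed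
  then show ?thesis using i by blast
qed

lemma le1_shape:
  assumes "\<alpha> \<in> monoms_in m" "xdeg m \<alpha> \<le> 1"
  shows "(\<exists>r. \<alpha> = Poly_Mapping.single 0 r \<and> wdeg S \<alpha> = r * m)
       \<or> (\<exists>r. \<exists>i\<in>{1..m-1}. \<alpha> = Poly_Mapping.single 0 r + Poly_Mapping.single i 1 \<and> wdeg S \<alpha> = r * m + a i)"
proof (cases "xdeg m \<alpha> = 0")
  case True
  then show ?thesis using xdeg0_shape[OF assms(1) True] a0[of 0]
    by (metis wdeg_single mod_0)
next
  case False
  then have "xdeg m \<alpha> = 1" using assms(2) by simp
  then obtain i where i: "i \<in> {1..m-1}" "\<alpha> = Poly_Mapping.single 0 (Poly_Mapping.lookup \<alpha> 0) + Poly_Mapping.single i 1"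
    using xdeg1_shape[OF assms(1)] by blast
  then have "wdeg S \<alpha> = Poly_Mapping.lookup \<alpha> 0 * m + a i"
    using a0[of 0] by (metis wdeg_add wdeg_single mod_0 mult_1)
  then show ?thesis using i by blast
qed

lemma wdeg_inj:
  assumes "\<alpha> \<in> monoms_in m" "xdeg m \<alpha> \<le> 1" "\<beta> \<in> monoms_in m" "xdeg m \<beta> \<le> 1"
    and "wdeg S \<alpha> = wdeg S \<beta>"
  shows "\<alpha> = \<beta>"
proof -
  have amod: "a i mod m = i" if "i \<in> {1..m-1}" for i
    using a_mod[of i] that m_nz by auto
  show ?thesis
    using le1_shape[OF assms(1,2)] le1_shape[OF assms(3,4)]
  proof (elim disjE exE bexE conjE)
    fix r r' assume "\<alpha> = Poly_Mapping.single 0 r" "wdeg S \<alpha> = r * m" "\<beta> = Poly_Mapping.single 0 r'" "wdeg S \<beta> = r' * m"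
    then show ?thesis using assms(5) m_nz by simp
  next
    fix r r' i assume h: "wdeg S \<alpha> = r * m" "i \<in> {1..m-1}" "wdeg S \<beta> = r' * m + a i"
    then have "(r * m) mod m = (r' * m + a i) mod m" using assms(5) by simp
    then show ?thesis using amod[OF h(2)] h(2) by simp
  next
    fix r r' i assume h: "wdeg S \<beta> = r * m" "i \<in> {1..m-1}" "wdeg S \<alpha> = r' * m + a i"
    then have "(r * m) mod m = (r' * m + a i) mod m" using assms(5) by simp
    then show ?thesis using amod[OF h(2)] h(2) by simp
  next
    fix r r' i j assume h: "\<alpha> = Poly_Mapping.single 0 r + Poly_Mapping.single i 1" "i \<in> {1..m-1}"
      "wdeg S \<alpha> = r * m + a i" "\<beta> = Poly_Mapping.single 0 r' + Poly_Mapping.single j 1" "j \<in> {1..m-1}"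
      "wdeg S \<beta> = r' * m + a j"
    then have "(r * m + a i) mod m = (r' * m + a j) mod m" using assms(5) by simp
    then have ij: "i = j" using amod[OF h(2)] amod[OF h(5)] by simp
    then have "r * m = r' * m" using h assms(5) by simp
    then have "r = r'" using m_nz by simp
    then show ?thesis using h ij by simp
  qed
qed

lemma zero_lemma:
  fixes p :: "'k::comm_ring_1 mpoly"
  assumes "p \<in> poly_ring m" "\<forall>\<alpha>\<in>Poly_Mapping.keys p. xdeg m \<alpha> \<le> 1" "apery_phi S p = 0"
  shows "p = 0"
proof (rule ccontr)
  assume "p \<noteq> 0"
  then obtain \<alpha> where \<alpha>: "\<alpha> \<in> Poly_Mapping.keys p" by (metis keys_eq_empty ex_in_conv)
  have km: "Poly_Mapping.keys p \<subseteq> monoms_in m" using assms(1) unfolding poly_ring_def by auto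
  have "coeff (apery_phi S p) (wdeg S \<alpha>) = (\<Sum>\<beta>\<in>Poly_Mapping.keys p. coeff (Polynomial.monom (Poly_Mapping.lookup p \<beta>) (wdeg S \<beta>)) (wdeg S \<alpha>))"
    unfolding apery_phi_def wdeg_def[symmetric] by (simp add: coeff_sum)
  also have "\<dots> = (\<Sum>\<beta>\<in>Poly_Mapping.keys p. if \<beta> = \<alpha> then Poly_Mapping.lookup p \<beta> else 0)"
  proof (rule sum.cong[OF refl])
    fix \<beta> assume \<beta>: "\<beta> \<in> Poly_Mapping.keys p"
    have "wdeg S \<beta> = wdeg S \<alpha> \<longleftrightarrow> \<beta> = \<alpha>"
      using wdeg_inj[of \<beta> \<alpha>] \<alpha> \<beta> km assms(2) by auto
    then show "coeff (Polynomial.monom (Poly_Mapping.lookup p \<beta>) (wdeg S \<beta>)) (wdeg S \<alpha>) = (if \<beta> = \<alpha> then Poly_Mapping.lookup p \<beta> else 0)"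
      by simp
  qed
  also have "\<dots> = Poly_Mapping.lookup p \<alpha>" using \<alpha> by simp
  finally have "Poly_Mapping.lookup p \<alpha> = 0" using assms(3) by simp
  then show False using \<alpha> by (simp add: in_keys_iff)
qed

definition bA :: "nat \<Rightarrow> nat \<Rightarrow> monom" where
  "bA i j = Poly_Mapping.single i 1 + Poly_Mapping.single j 1"
definition bB :: "nat \<Rightarrow> nat \<Rightarrow> monom" where
  "bB i j = Poly_Mapping.single 0 (cij S i j) + Poly_Mapping.single ((i + j) mod m) 1"

lemma binom_eq:
  "var i * var j - var 0 ^ cij S i j * var ((i + j) mod m) = (monom_poly (bA i j) - monom_poly (bB i j) :: 'k::comm_ring_1 mpoly)"
proof -
  have v: "var k = (monom_poly (Poly_Mapping.single k 1) :: 'k mpoly)" for k by (simp add: var_def monom_poly_def)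
  show ?thesis unfolding bA_def bB_def
    by (simp only: var_mult var_pow) (simp only: v monom_poly_mult)
qed

lemma B_eq: "apery_binomials S = {monom_poly (bA i j) - monom_poly (bB i j) | i j. 1 \<le> i \<and> i \<le> j \<and> j \<le> m - 1}"
  unfolding apery_binomials_def Let_def binom_eq ..

lemma ij_range: "i \<in> {1..m-1} \<Longrightarrow> i < m" using m_nz by auto

lemma bA_props:
  assumes "1 \<le> i" "i \<le> m - 1" "1 \<le> j" "j \<le> m - 1"
  shows "bA i j \<in> monoms_in m" "xdeg m (bA i j) = 2" "bB i j \<in> monoms_in m" "xdeg m (bB i j) \<le> 1"
    "wdeg S (bA i j) = wdeg S (bB i j)" "bA i j \<noteq> bB i j"
proof -
  have im: "i < m" "j < m" using assms m_nz by auto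
  show 1: "bA i j \<in> monoms_in m" unfolding bA_def using im by (intro monoms_in_add monoms_in_single)
  show 2: "xdeg m (bA i j) = 2" unfolding bA_def using assms by (simp add: xdeg_add xdeg_single)
  show "bB i j \<in> monoms_in m" unfolding bB_def using m_nz by (intro monoms_in_add monoms_in_single) auto
  show 3: "xdeg m (bB i j) \<le> 1" unfolding bB_def by (simp add: xdeg_add xdeg_single)
  show "wdeg S (bA i j) = wdeg S (bB i j)" unfolding bA_def bB_def
    using cij_eq[OF assms] a0[of 0] by (simp add: wdeg_add wdeg_single)
  show "bA i j \<noteq> bB i j" using 2 3 by auto
qed

abbreviation "J \<equiv> apery_toric_ideal S"

lemma binom_in_J:
  assumes "1 \<le> i" "i \<le> m - 1" "1 \<le> j" "j \<le> m - 1"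
  shows "(monom_poly (bA i j) - monom_poly (bB i j) :: 'k::comm_ring_1 mpoly) \<in> J"
  unfolding apery_toric_ideal_def monom_poly_def
  using bA_props[OF assms]
  by (auto intro!: pr_diff pr_single simp: phi_diff phi_single)

lemma B_J: "(apery_binomials S :: 'k::comm_ring_1 mpoly set) \<subseteq> J"
  unfolding B_eq by (auto intro!: binom_in_J)

lemma J_pr: "J \<subseteq> poly_ring m"
  unfolding apery_toric_ideal_def by auto

lemma igB_J: "ideal_gen m (apery_binomials S) \<subseteq> (J :: 'k::comm_ring_1 mpoly set)"
proof
  fix p :: "'k mpoly" assume "p \<in> ideal_gen m (apery_binomials S)"
  then obtain F q where 1: "finite F" "F \<subseteq> apery_binomials S" "\<forall>g\<in>F. q g \<in> poly_ring m" "p = (\<Sum>g\<in>F. q g * g)"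
    unfolding ideal_gen_def by auto
  have FJ: "F \<subseteq> J" using 1 B_J by blast
  have "p \<in> poly_ring m" unfolding 1(4) using 1(3) FJ J_pr by (intro pr_sum pr_mult) auto
  moreover have "apery_phi S p = 0" unfolding 1(4) phi_sum phi_mult
    using FJ unfolding apery_toric_ideal_def by (intro sum.neutral) auto
  ultimately show "p \<in> J" unfolding apery_toric_ideal_def by simp
qed


lemma peel:
  assumes "\<alpha> \<in> monoms_in m" "xdeg m \<alpha> \<ge> 1"
  shows "\<exists>i\<in>{1..m-1}. \<exists>\<gamma>\<in>monoms_in m. \<alpha> = \<gamma> + Poly_Mapping.single i 1 \<and> xdeg m \<gamma> + 1 = xdeg m \<alpha>"
proof -
  obtain i where i: "i \<in> {1..m-1}" "Poly_Mapping.lookup \<alpha> i \<noteq> 0"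
    using assms(2) unfolding xdeg_def by (metis (no_types, lifting) sum.neutral not_one_le_zero)
  define \<gamma> where "\<gamma> = \<alpha> - Poly_Mapping.single i 1"
  have eq: "\<alpha> = \<gamma> + Poly_Mapping.single i 1"
    by (rule poly_mapping_eqI) (use i in \<open>auto simp: \<gamma>_def lookup_add lookup_minus lookup_single when_def\<close>)
  have "Poly_Mapping.keys \<gamma> \<subseteq> Poly_Mapping.keys \<alpha>"
    by (auto simp: \<gamma>_def in_keys_iff lookup_minus)
  then have "\<gamma> \<in> monoms_in m" using assms(1) unfolding monoms_in_def by auto
  moreover have "xdeg m \<gamma> + 1 = xdeg m \<alpha>"
    using eq i by (metis xdeg_add xdeg_single)
  ultimately show ?thesis using eq i by blast
qed

lemma reduce:
  "\<forall>\<alpha>\<in>monoms_in m. xdeg m \<alpha> = n \<longrightarrow> (\<exists>\<beta>\<in>monoms_in m. xdeg m \<beta> \<le> 1 \<and> wdeg S \<beta> = wdeg S \<alpha>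
      \<and> monom_poly \<alpha> - monom_poly \<beta> \<in> ideal_gen m (apery_binomials S :: 'k::comm_ring_1 mpoly set))"
proof (induction n rule: less_induct)
  case (less n)
  show ?case
  proof (intro ballI impI)
    fix \<alpha> assume \<alpha>: "\<alpha> \<in> monoms_in m" "xdeg m \<alpha> = n"
    show "\<exists>\<beta>\<in>monoms_in m. xdeg m \<beta> \<le> 1 \<and> wdeg S \<beta> = wdeg S \<alpha>
      \<and> monom_poly \<alpha> - monom_poly \<beta> \<in> ideal_gen m (apery_binomials S :: 'k mpoly set)"
    proof (cases "n \<le> 1")
      case True
      then show ?thesis using \<alpha> by (intro bexI[of _ \<alpha>]) (auto simp: ig_zero)
    next
      case False
      obtain i \<gamma>1 where i: "i \<in> {1..m-1}" "\<gamma>1 \<in> monoms_in m" "\<alpha> = \<gamma>1 + Poly_Mapping.single i 1" "xdeg m \<gamma>1 + 1 = n"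
        using peel[OF \<alpha>(1)] \<alpha>(2) False by (metis not_le less_imp_le)
      obtain j \<gamma> where j: "j \<in> {1..m-1}" "\<gamma> \<in> monoms_in m" "\<gamma>1 = \<gamma> + Poly_Mapping.single j 1" "xdeg m \<gamma> + 1 = xdeg m \<gamma>1"
      proof -
        have "xdeg m \<gamma>1 \<ge> 1" using i(4) False by simp
        then show ?thesis using peel[OF i(2)] that by blast
      qed
      define i' where "i' = min i j"
      define j' where "j' = max i j"
      have r: "1 \<le> i'" "i' \<le> j'" "j' \<le> m - 1" "1 \<le> j'" "i' \<le> m - 1"
        using i j unfolding i'_def j'_def by auto
      have bA: "bA i' j' = Poly_Mapping.single i 1 + Poly_Mapping.single j 1"
        unfolding bA_def i'_def j'_def by (cases "i \<le> j") (auto simp: add.commute)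
      have \<alpha>eq: "\<alpha> = \<gamma> + bA i' j'" using i(3) j(3) bA by (simp add: ac_simps)
      define \<beta>' where "\<beta>' = \<gamma> + bB i' j'"
      note P = bA_props[OF r(1) r(5) r(4) r(3)]
      have \<beta>'m: "\<beta>' \<in> monoms_in m" unfolding \<beta>'_def using P j(2) by (intro monoms_in_add)
      have \<beta>'x: "xdeg m \<beta>' < n" unfolding \<beta>'_def using P i(4) j(4) by (simp add: xdeg_add)
      have \<beta>'w: "wdeg S \<beta>' = wdeg S \<alpha>" unfolding \<beta>'_def \<alpha>eq using P by (simp add: wdeg_add)
      obtain \<beta> where \<beta>: "\<beta> \<in> monoms_in m" "xdeg m \<beta> \<le> 1" "wdeg S \<beta> = wdeg S \<beta>'"
          "monom_poly \<beta>' - monom_poly \<beta> \<in> ideal_gen m (apery_binomials S :: 'k mpoly set)"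
        using less.IH[OF \<beta>'x] \<beta>'m by blast
      have gB: "(monom_poly (bA i' j') - monom_poly (bB i' j') :: 'k mpoly) \<in> apery_binomials S"
        unfolding B_eq using r by blast
      have "(monom_poly \<alpha> - monom_poly \<beta>' :: 'k mpoly) = monom_poly \<gamma> * (monom_poly (bA i' j') - monom_poly (bB i' j'))"
        unfolding \<alpha>eq \<beta>'_def by (simp add: right_diff_distrib monom_poly_mult)
      also have "\<dots> \<in> ideal_gen m (apery_binomials S)"
        using j(2) gB unfolding monom_poly_def by (intro ig_mult pr_single ig_gen)
      finally have "(monom_poly \<alpha> - monom_poly \<beta>') + (monom_poly \<beta>' - monom_poly \<beta>) \<in> ideal_gen m (apery_binomials S :: 'k mpoly set)"
        using \<beta>(4) by (intro ig_add)
      then show ?thesis using \<beta> \<beta>'w by (intro bexI[of _ \<beta>]) auto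
    qed
  qed
qed

lemma J_igB: "(J :: 'k::comm_ring_1 mpoly set) \<subseteq> ideal_gen m (apery_binomials S)"
proof
  fix p :: "'k mpoly" assume pJ: "p \<in> J"
  have km: "Poly_Mapping.keys p \<subseteq> monoms_in m" using pJ J_pr unfolding poly_ring_def by auto
  have "\<forall>\<alpha>\<in>Poly_Mapping.keys p. \<exists>\<beta>. \<beta> \<in> monoms_in m \<and> xdeg m \<beta> \<le> 1 \<and> wdeg S \<beta> = wdeg S \<alpha>
      \<and> monom_poly \<alpha> - monom_poly \<beta> \<in> ideal_gen m (apery_binomials S :: 'k mpoly set)"
    using reduce km by blast
  then obtain nf where nf: "\<And>\<alpha>. \<alpha> \<in> Poly_Mapping.keys p \<Longrightarrow> nf \<alpha> \<in> monoms_in m \<and> xdeg m (nf \<alpha>) \<le> 1 \<and> wdeg S (nf \<alpha>) = wdeg S \<alpha>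
      \<and> monom_poly \<alpha> - monom_poly (nf \<alpha>) \<in> ideal_gen m (apery_binomials S :: 'k mpoly set)"
    by metis
  let ?c = "Poly_Mapping.lookup p"
  define p' where "p' = (\<Sum>\<alpha>\<in>Poly_Mapping.keys p. Poly_Mapping.single (nf \<alpha>) (?c \<alpha>))"
  have "p - p' = (\<Sum>\<alpha>\<in>Poly_Mapping.keys p. Poly_Mapping.single 0 (?c \<alpha>) * (monom_poly \<alpha> - monom_poly (nf \<alpha>)))"
    unfolding p'_def
    by (subst (1) expansion[of p]) (simp add: sum_subtractf right_diff_distrib monom_poly_def mult_single)
  also have "\<dots> \<in> ideal_gen m (apery_binomials S)"
    using nf by (intro ig_sum ig_mult pr_single monoms_in_zero) auto
  finally have d: "p - p' \<in> ideal_gen m (apery_binomials S)" .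
  have p'r: "p' \<in> poly_ring m" unfolding p'_def using nf by (intro pr_sum pr_single) auto
  have "Poly_Mapping.keys p' \<subseteq> nf ` Poly_Mapping.keys p"
    unfolding p'_def using keys_sum by (force split: if_splits)
  then have p'x: "\<forall>\<alpha>\<in>Poly_Mapping.keys p'. xdeg m \<alpha> \<le> 1" using nf by auto
  have "apery_phi S p' = (\<Sum>\<alpha>\<in>Poly_Mapping.keys p. Polynomial.monom (?c \<alpha>) (wdeg S \<alpha>))"
    unfolding p'_def phi_sum phi_single using nf by (intro sum.cong) auto
  also have "\<dots> = apery_phi S p" unfolding apery_phi_def wdeg_def ..
  also have "\<dots> = 0" using pJ unfolding apery_toric_ideal_def by simp
  finally have "p' = 0" using zero_lemma[OF p'r p'x] by simp
  then show "p \<in> ideal_gen m (apery_binomials S)" using d by simp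
qed

lemma two_peel:
  assumes "\<alpha> \<in> monoms_in m" "xdeg m \<alpha> \<ge> 2"
  shows "\<exists>i j \<gamma>. i \<in> {1..m-1} \<and> j \<in> {1..m-1} \<and> \<gamma> \<in> monoms_in m \<and> \<alpha> = \<gamma> + (Poly_Mapping.single j 1 + Poly_Mapping.single i 1)"
proof -
  obtain i \<gamma>1 where i: "i \<in> {1..m-1}" "\<gamma>1 \<in> monoms_in m" "\<alpha> = \<gamma>1 + Poly_Mapping.single i 1" "xdeg m \<gamma>1 + 1 = xdeg m \<alpha>"
    using peel[OF assms(1)] assms(2) by (metis le_trans one_le_numeral)
  have "xdeg m \<gamma>1 \<ge> 1" using i(4) assms(2) by simp
  then obtain j \<gamma> where j: "j \<in> {1..m-1}" "\<gamma> \<in> monoms_in m" "\<gamma>1 = \<gamma> + Poly_Mapping.single j 1"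
    using peel[OF i(2)] by blast
  show ?thesis using i j by (intro exI[of _ i] exI[of _ j] exI[of _ \<gamma>]) (simp add: ac_simps)
qed

end

lemma to_refl: "term_order m le \<Longrightarrow> \<alpha> \<in> monoms_in m \<Longrightarrow> le \<alpha> \<alpha>"
  unfolding term_order_def by blast
lemma to_antisym: "term_order m le \<Longrightarrow> \<alpha> \<in> monoms_in m \<Longrightarrow> \<beta> \<in> monoms_in m \<Longrightarrow> le \<alpha> \<beta> \<Longrightarrow> le \<beta> \<alpha> \<Longrightarrow> \<alpha> = \<beta>"
  unfolding term_order_def by blast
lemma to_trans: "term_order m le \<Longrightarrow> \<alpha> \<in> monoms_in m \<Longrightarrow> \<beta> \<in> monoms_in m \<Longrightarrow> \<gamma> \<in> monoms_in m \<Longrightarrow> le \<alpha> \<beta> \<Longrightarrow> le \<beta> \<gamma> \<Longrightarrow> le \<alpha> \<gamma>"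
  unfolding term_order_def by blast
lemma to_total: "term_order m le \<Longrightarrow> \<alpha> \<in> monoms_in m \<Longrightarrow> \<beta> \<in> monoms_in m \<Longrightarrow> le \<alpha> \<beta> \<or> le \<beta> \<alpha>"
  unfolding term_order_def by blast

lemma lm_eq:
  assumes "term_order m le" "p \<in> poly_ring m" "\<alpha> \<in> Poly_Mapping.keys p" "\<forall>\<beta>\<in>Poly_Mapping.keys p. le \<beta> \<alpha>"
  shows "lead_monom le p = \<alpha>"
  unfolding lead_monom_def
proof (rule the_equality)
  show "\<alpha> \<in> Poly_Mapping.keys p \<and> (\<forall>\<beta>\<in>Poly_Mapping.keys p. le \<beta> \<alpha>)" using assms by blast
next
  fix x assume x: "x \<in> Poly_Mapping.keys p \<and> (\<forall>\<beta>\<in>Poly_Mapping.keys p. le \<beta> x)"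
  have km: "Poly_Mapping.keys p \<subseteq> monoms_in m" using assms(2) unfolding poly_ring_def by auto
  have "le x \<alpha>" "le \<alpha> x" using x assms(3,4) by auto
  then show "x = \<alpha>" using to_antisym[OF assms(1)] x assms(3) km by blast
qed

lemma max_ex:
  assumes "term_order m le" "finite K" "K \<noteq> {}" "K \<subseteq> monoms_in m"
  shows "\<exists>\<alpha>\<in>K. \<forall>\<beta>\<in>K. le \<beta> \<alpha>"
  using assms(2,3,4)
proof (induction K rule: finite_ne_induct)
  case (singleton x)
  then show ?case using to_refl[OF assms(1)] by auto
next
  case (insert x F)
  then obtain \<alpha> where \<alpha>: "\<alpha> \<in> F" "\<forall>\<beta>\<in>F. le \<beta> \<alpha>" by auto
  have xm: "x \<in> monoms_in m" and Fm: "F \<subseteq> monoms_in m" using insert by auto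
  have \<alpha>m: "\<alpha> \<in> monoms_in m" using \<alpha> Fm by auto
  have refl: "le x x" using to_refl[OF assms(1) xm] .
  have tot: "le x \<alpha> \<or> le \<alpha> x" using to_total[OF assms(1) xm \<alpha>m] .
  note trans = to_trans[OF assms(1)]
  show ?case
  proof (cases "le \<alpha> x")
    case True
    have "\<forall>\<beta>\<in>insert x F. le \<beta> x" using \<alpha> True refl trans[of _ \<alpha> x] xm Fm by blast
    then show ?thesis by blast
  next
    case False
    then have "le x \<alpha>" using tot by auto
    then show ?thesis using \<alpha> by blast
  qed
qed

lemma lm_prop:
  assumes "term_order m le" "p \<in> poly_ring m" "p \<noteq> 0"
  shows "lead_monom le p \<in> Poly_Mapping.keys p \<and> (\<forall>\<beta>\<in>Poly_Mapping.keys p. le \<beta> (lead_monom le p))"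
proof -
  have km: "Poly_Mapping.keys p \<subseteq> monoms_in m" using assms(2) unfolding poly_ring_def by auto
  obtain \<alpha> where "\<alpha> \<in> Poly_Mapping.keys p" "\<forall>\<beta>\<in>Poly_Mapping.keys p. le \<beta> \<alpha>"
    using max_ex[OF assms(1) finite_keys _ km] assms(3) by auto
  then show ?thesis using lm_eq[OF assms(1,2)] by simp
qed

context nsg
begin

lemma lm_binom:
  assumes TO: "term_order m le"
    and H: "\<forall>\<alpha>\<in>monoms_in m. \<forall>\<beta>\<in>monoms_in m. xdeg m \<beta> < xdeg m \<alpha> \<longrightarrow> le \<beta> \<alpha> \<and> \<alpha> \<noteq> \<beta>"
    and r: "1 \<le> i" "i \<le> m - 1" "1 \<le> j" "j \<le> m - 1"
  shows "lead_monom le (monom_poly (bA i j) - monom_poly (bB i j) :: 'k::comm_ring_1 mpoly) = bA i j"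
    "(monom_poly (bA i j) - monom_poly (bB i j) :: 'k::comm_ring_1 mpoly) \<noteq> 0"
proof -
  note P = bA_props[OF r]
  let ?g = "(monom_poly (bA i j) - monom_poly (bB i j) :: 'k::comm_ring_1 mpoly)"
  have l: "Poly_Mapping.lookup ?g (bA i j) = 1" using P
    by (simp add: monom_poly_def lookup_minus lookup_single when_def)
  then have inA: "bA i j \<in> Poly_Mapping.keys ?g" by (simp add: in_keys_iff)
  have ks: "Poly_Mapping.keys ?g \<subseteq> {bA i j, bB i j}"
    by (auto simp: monom_poly_def in_keys_iff lookup_minus lookup_single when_def split: if_splits)
  have "le (bB i j) (bA i j)" using H P by auto
  moreover have "le (bA i j) (bA i j)" using to_refl[OF TO] P by auto
  ultimately have "le (bB i j) (bA i j)" "le (bA i j) (bA i j)" by auto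
  then have "\<forall>\<beta>\<in>Poly_Mapping.keys ?g. le \<beta> (bA i j)" using ks by auto
  moreover have "?g \<in> poly_ring m" using P unfolding monom_poly_def by (intro pr_diff pr_single)
  ultimately show "lead_monom le ?g = bA i j" using lm_eq[OF TO _ inA] by blast
  show "?g \<noteq> 0" using l by auto
qed

lemma lm_J:
  assumes TO: "term_order m le"
    and H: "\<forall>\<alpha>\<in>monoms_in m. \<forall>\<beta>\<in>monoms_in m. xdeg m \<beta> < xdeg m \<alpha> \<longrightarrow> le \<beta> \<alpha> \<and> \<alpha> \<noteq> \<beta>"
    and pJ: "(p :: 'k::comm_ring_1 mpoly) \<in> J" and p0: "p \<noteq> 0"
  shows "xdeg m (lead_monom le p) \<ge> 2" "lead_monom le p \<in> monoms_in m"
proof -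
  have pr: "p \<in> poly_ring m" using pJ J_pr by auto
  have km: "Poly_Mapping.keys p \<subseteq> monoms_in m" using pr unfolding poly_ring_def by auto
  note L = lm_prop[OF TO pr p0]
  show "lead_monom le p \<in> monoms_in m" using L km by auto
  show "xdeg m (lead_monom le p) \<ge> 2"
  proof (rule ccontr)
    assume "\<not> 2 \<le> xdeg m (lead_monom le p)"
    then have lx: "xdeg m (lead_monom le p) \<le> 1" by simp
    have "\<forall>\<beta>\<in>Poly_Mapping.keys p. xdeg m \<beta> \<le> 1"
    proof
      fix \<beta> assume b: "\<beta> \<in> Poly_Mapping.keys p"
      show "xdeg m \<beta> \<le> 1"
      proof (rule ccontr)
        assume "\<not> xdeg m \<beta> \<le> 1"
        then have "xdeg m (lead_monom le p) < xdeg m \<beta>" using lx by simp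
        then have "le (lead_monom le p) \<beta>" "\<beta> \<noteq> lead_monom le p" using H b L km by auto
        moreover have "le \<beta> (lead_monom le p)" using L b by auto
        ultimately show False using to_antisym[OF TO, of \<beta> "lead_monom le p"] b L km by blast
      qed
    qed
    then have "p = 0" using zero_lemma[OF pr] pJ unfolding apery_toric_ideal_def by auto
    then show False using p0 by simp
  qed
qed

end

theorem lemma3p1:
  fixes S :: "nat set" and le :: "monom \<Rightarrow> monom \<Rightarrow> bool"
  assumes "numerical_semigroup S"
    and "multiplicity S \<ge> 2"
    and "term_order (multiplicity S) le"
    and "\<forall>\<alpha>\<in>monoms_in (multiplicity S). \<forall>\<beta>\<in>monoms_in (multiplicity S).
           (\<Sum>i\<in>{1..multiplicity S - 1}. Poly_Mapping.lookup \<alpha> i) > (\<Sum>i\<in>{1..multiplicity S - 1}. Poly_Mapping.lookup \<beta> i)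
           \<longrightarrow> le \<beta> \<alpha> \<and> \<alpha> \<noteq> \<beta>"
  shows "ideal_gen (multiplicity S) (apery_binomials S) = (apery_toric_ideal S :: 'k::field mpoly set)
       \<and> groebner_basis (multiplicity S) le (apery_binomials S) (apery_toric_ideal S :: 'k mpoly set)
       \<and> initial_ideal (multiplicity S) le (apery_toric_ideal S :: 'k mpoly set)
           = ideal_gen (multiplicity S) {var i * var j | i j. 1 \<le> i \<and> i \<le> multiplicity S - 1
                                                          \<and> 1 \<le> j \<and> j \<le> multiplicity S - 1}"
proof -
  interpret nsg S using assms(1,2) by unfold_locales
  have TO: "term_order m le" using assms(3) .
  have H: "\<forall>\<alpha>\<in>monoms_in m. \<forall>\<beta>\<in>monoms_in m. xdeg m \<beta> < xdeg m \<alpha> \<longrightarrow> le \<beta> \<alpha> \<and> \<alpha> \<noteq> \<beta>"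
    using assms(4) unfolding xdeg_def .
  define B where "B = (apery_binomials S :: 'k mpoly set)"
  define X where "X = ({var i * var j | i j. 1 \<le> i \<and> i \<le> m - 1 \<and> 1 \<le> j \<and> j \<le> m - 1} :: 'k mpoly set)"
  define Lb where "Lb = ({monom_poly (lead_monom le g) | g. g \<in> B \<and> g \<noteq> 0} :: 'k mpoly set)"
  define L where "L = ({monom_poly (lead_monom le p) | p. p \<in> (J :: 'k mpoly set) \<and> p \<noteq> 0} :: 'k mpoly set)"
  have J1: "ideal_gen m B = J" unfolding B_def using igB_J J_igB by blast
  have BJ: "B \<subseteq> J" unfolding B_def using B_J .
  have vm: "var i * var j = (monom_poly (bA i j) :: 'k mpoly)" for i j
    unfolding bA_def by (rule var_mult)
  have LbX: "Lb = X"
  proof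
    show "Lb \<subseteq> X"
    proof
      fix x assume "x \<in> Lb"
      then obtain g where g: "g \<in> B" "g \<noteq> 0" "x = monom_poly (lead_monom le g)" unfolding Lb_def by blast
      then obtain i j where ij: "1 \<le> i" "i \<le> j" "j \<le> m - 1" "g = monom_poly (bA i j) - monom_poly (bB i j)"
        unfolding B_def B_eq by blast
      have "lead_monom le g = bA i j" using lm_binom[OF TO H, of i j] ij by auto
      then show "x \<in> X" using g ij vm unfolding X_def by fastforce
    qed
  next
    show "X \<subseteq> Lb"
    proof
      fix x assume "x \<in> X"
      then obtain i j where ij: "1 \<le> i" "i \<le> m - 1" "1 \<le> j" "j \<le> m - 1" "x = var i * var j"
        unfolding X_def by blast
      define i' where "i' = min i j"
      define j' where "j' = max i j"
      have r: "1 \<le> i'" "i' \<le> j'" "j' \<le> m - 1" "i' \<le> m - 1" "1 \<le> j'"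
        using ij unfolding i'_def j'_def by auto
      have x: "x = monom_poly (bA i' j')"
        using ij(5) vm[of i' j'] unfolding i'_def j'_def by (cases "i \<le> j") (auto simp: mult.commute)
      let ?g = "(monom_poly (bA i' j') - monom_poly (bB i' j') :: 'k mpoly)"
      have "?g \<in> B" unfolding B_def B_eq using r by blast
      moreover have "?g \<noteq> 0" "lead_monom le ?g = bA i' j'" using lm_binom[OF TO H r(1) r(4) r(5) r(3)] by auto
      ultimately show "x \<in> Lb" unfolding Lb_def x by (intro CollectI exI[of _ ?g]) auto
    qed
  qed
  have XL: "X \<subseteq> L" using BJ unfolding LbX[symmetric] Lb_def L_def by blast
  have LX: "L \<subseteq> ideal_gen m X"
  proof
    fix x assume "x \<in> L"
    then obtain p :: "'k mpoly" where p: "p \<in> J" "p \<noteq> 0" "x = monom_poly (lead_monom le p)" unfolding L_def by blast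
    obtain i j \<gamma> where ij: "i \<in> {1..m-1}" "j \<in> {1..m-1}" "\<gamma> \<in> monoms_in m"
        "lead_monom le p = \<gamma> + (Poly_Mapping.single j 1 + Poly_Mapping.single i 1)"
      using two_peel lm_J[OF TO H p(1,2)] by blast
    have "x = monom_poly \<gamma> * (var j * var i)" using p(3) ij(4) by (simp add: var_mult monom_poly_mult)
    also have "\<dots> \<in> ideal_gen m X"
      using ij unfolding monom_poly_def X_def by (intro ig_mult pr_single ig_gen) auto
    finally show "x \<in> ideal_gen m X" .
  qed
  have IL: "ideal_gen m L = ideal_gen m X" using ig_subset[OF XL] ig_mono[OF LX] by blast
  have init: "initial_ideal m le (J :: 'k mpoly set) = ideal_gen m X"
    unfolding initial_ideal_def L_def[symmetric] by (rule IL)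
  have gb: "groebner_basis m le B (J :: 'k mpoly set)"
    unfolding groebner_basis_def Lb_def[symmetric] LbX init using BJ by simp
  show ?thesis using J1 gb init unfolding B_def X_def by simp
qed
end
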